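(* Let $X$ be a vector space with a separating family of seminorms $\{p_k\}_{k\in\mathbb{N}}$, equipped with the metric $d(x,y)=\max_{k\in\mathbb{N}}\Big\{2^{-k}\frac{p_k(x-y)}{1+p_k(x-y)}\Big\}$, and assume $(X,d)$ is complete. Let $\{A_n\}$ be an approximation scheme on $X$. Assume that there exist $(M_k)\subset[0,\infty)$, an infinite set $\mathbb{N}_0\subseteq\mathbb{N}$, elements $\{x_n\}_{n\in\mathbb{N}_0}\subseteq X$, $m_0\in\mathbb{N}$ and $\delta>0$ such that: (a) $p_k(x_n)\le M_k$ for all $k\in\mathbb{N}$ and $n\in\mathbb{N}_0$; (b) $E_{m_0}(x_n,A_n):=\inf_{a\in A_n}p_{m_0}(x_n-a)>\delta$ for all $n\in\mathbb{N}_0$. Then $\{A_n\}$ satisfies Shapiro's theorem on $X$.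
   Context: An approximation scheme on $X$ is a chain $A_0\subsetneq A_1\subsetneq\cdots\subsetneq X$ of subsets with: (A1) there is $K:\mathbb{N}\to\mathbb{N}$, $K(n)\ge n$, $A_n+A_n\subseteq A_{K(n)}$; (A2) $\lambda A_n\subseteq A_n$ for all scalars $\lambda$; (A3) $\bigcup_nA_n$ dense in $X$. $E(x,A)=\inf_{a\in A}d(x,a)$. $\{A_n\}$ satisfies Shapiro's theorem on $X$ if for every non-increasing sequence $\{\varepsilon_n\}$ of nonnegative reals tending to $0$ there exists $x\in X$ with $E(x,A_n)\neq\mathbf{O}(\varepsilon_n)$. *)

theory Defs
  imports "HOL-Analysis.Analysis" "HOL-Library.Landau_Symbols"
begin

definition seminorm :: "('a::real_vector \<Rightarrow> real) \<Rightarrow> bool" where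
  "seminorm q \<longleftrightarrow> (\<forall>x. 0 \<le> q x) \<and> (\<forall>x y. q (x + y) \<le> q x + q y)
      \<and> (\<forall>c x. q (c *\<^sub>R x) = \<bar>c\<bar> * q x)"

definition separating_seminorms :: "(nat \<Rightarrow> 'a::real_vector \<Rightarrow> real) \<Rightarrow> bool" where
  "separating_seminorms p \<longleftrightarrow> (\<forall>k. seminorm (p k)) \<and> (\<forall>x. x \<noteq> 0 \<longrightarrow> (\<exists>k. p k x \<noteq> 0))"

definition sn_dist :: "(nat \<Rightarrow> 'a::real_vector \<Rightarrow> real) \<Rightarrow> 'a \<Rightarrow> 'a \<Rightarrow> real" where
  "sn_dist p x y = (SUP k. (1/2) ^ k * (p k (x - y) / (1 + p k (x - y))))"

definition sn_complete :: "(nat \<Rightarrow> 'a::real_vector \<Rightarrow> real) \<Rightarrow> bool" where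
  "sn_complete p \<longleftrightarrow> (\<forall>s::nat \<Rightarrow> 'a.
      (\<forall>e>0. \<exists>N. \<forall>m\<ge>N. \<forall>n\<ge>N. sn_dist p (s m) (s n) < e) \<longrightarrow>
      (\<exists>l. (\<lambda>n. sn_dist p (s n) l) \<longlonglongrightarrow> 0))"

definition approx_scheme :: "(nat \<Rightarrow> 'a::real_vector \<Rightarrow> real) \<Rightarrow> (nat \<Rightarrow> 'a set) \<Rightarrow> bool" where
  "approx_scheme p A \<longleftrightarrow>
     (\<forall>n. A n \<subset> A (Suc n)) \<and>
     (\<exists>K::nat \<Rightarrow> nat. \<forall>n. n \<le> K n \<and> {a + b | a b. a \<in> A n \<and> b \<in> A n} \<subseteq> A (K n)) \<and>
     (\<forall>n c. (\<lambda>a. c *\<^sub>R a) ` A n \<subseteq> A n) \<and>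
     (\<forall>x. \<forall>e>0. \<exists>y\<in>(\<Union>n. A n). sn_dist p x y < e)"

definition best_err :: "(nat \<Rightarrow> 'a::real_vector \<Rightarrow> real) \<Rightarrow> 'a \<Rightarrow> 'a set \<Rightarrow> real" where
  "best_err p x S = (INF a\<in>S. sn_dist p x a)"

definition shapiro :: "(nat \<Rightarrow> 'a::real_vector \<Rightarrow> real) \<Rightarrow> (nat \<Rightarrow> 'a set) \<Rightarrow> bool" where
  "shapiro p A \<longleftrightarrow> (\<forall>eps::nat \<Rightarrow> real. decseq eps \<and> (\<forall>n. 0 \<le> eps n) \<and> eps \<longlonglongrightarrow> 0 \<longrightarrow>
       (\<exists>x. (\<lambda>n. best_err p x (A n)) \<notin> O(eps)))"

end

theory Submission
  imports Defs
begin


lemma sem_nonneg: "seminorm q \<Longrightarrow> 0 \<le> q x" by (simp add: seminorm_def)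
lemma sem_tri: "seminorm q \<Longrightarrow> q (x + y) \<le> q x + q y" by (simp add: seminorm_def)
lemma sem_scale: "seminorm q \<Longrightarrow> q (c *\<^sub>R x) = \<bar>c\<bar> * q x" by (simp add: seminorm_def)
lemma sem_neg: "seminorm q \<Longrightarrow> q (- x) = q x"
  using sem_scale[of q "-1" x] by simp
lemma sem_minus_sym: "seminorm q \<Longrightarrow> q (x - y) = q (y - x)"
  using sem_neg[of q "x - y"] by simp
lemma sem_zero: "seminorm q \<Longrightarrow> q 0 = 0"
  using sem_scale[of q 0 0] by simp
lemma sem_sum: "seminorm q \<Longrightarrow> q (sum f S) \<le> (\<Sum>i\<in>S. q (f i))"
proof (induction S rule: infinite_finite_induct)
  case (infinite A) then show ?case by (simp add: sem_zero)
next
  case empty then show ?case by (simp add: sem_zero)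
next
  case (insert x F)
  then show ?case using sem_tri[of q "f x" "sum f F"] by simp
qed
lemma sem_diff_ge: "seminorm q \<Longrightarrow> q x - q y \<le> q (x - y)"
  using sem_tri[of q "x - y" y] by simp

lemma phi_mono_less:
  fixes t s :: real
  assumes "0 \<le> t" "0 \<le> s" "t / (1 + t) < s / (1 + s)" shows "t < s"
  using assms by (simp add: divide_simps algebra_simps)

lemma phi_mono_le:
  fixes t s :: real
  assumes "0 \<le> t" "t \<le> s" shows "t / (1 + t) \<le> s / (1 + s)"
  using assms by (simp add: divide_simps algebra_simps)

lemma sn_term_bdd:
  assumes "\<forall>k. seminorm (p k)"
  shows "bdd_above (range (\<lambda>k. (1/2::real) ^ k * (p k z / (1 + p k z))))"
proof (rule bdd_aboveI2)
  fix k
  have "0 \<le> p k z" using assms sem_nonneg by blast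
  then have "p k z / (1 + p k z) \<le> 1" by simp
  moreover have "(1/2::real)^k \<le> 1" by (simp add: power_le_one)
  ultimately show "(1/2::real) ^ k * (p k z / (1 + p k z)) \<le> 1"
    using \<open>0 \<le> p k z\<close> mult_mono[of "(1/2::real)^k" 1 "p k z / (1 + p k z)" 1] by simp
qed

lemma sn_lower:
  assumes "\<forall>k. seminorm (p k)"
  shows "(1/2::real) ^ k * (p k (u - v) / (1 + p k (u - v))) \<le> sn_dist p u v"
  unfolding sn_dist_def using sn_term_bdd[OF assms, of "u - v"] by (rule cSUP_upper[OF UNIV_I])

lemma sn_upper:
  assumes "\<And>k. (1/2::real) ^ k * (p k (u - v) / (1 + p k (u - v))) \<le> e"
  shows "sn_dist p u v \<le> e"
  unfolding sn_dist_def by (rule cSUP_least) (use assms in auto)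

lemma geo_bound:
  fixes th :: real
  assumes "0 \<le> th" "th \<le> 1/2" "n \<le> m"
  shows "(\<Sum>j\<in>{n..<m}. th ^ j) \<le> 2 * th ^ n - 2 * th ^ m"
  using assms(3)
proof (induction m rule: dec_induct)
  case base then show ?case by simp
next
  case (step m)
  have "th * 2 * th ^ m \<le> 1 * th ^ m" using assms by (intro mult_right_mono) auto
  then have "th ^ Suc m \<le> th ^ m / 2" by simp
  then show ?case using step by simp
qed

primrec build :: "(nat \<Rightarrow> 'a \<Rightarrow> nat \<Rightarrow> nat \<times> nat) \<Rightarrow> (nat \<Rightarrow> nat \<Rightarrow> 'a::real_vector) \<Rightarrow> nat \<Rightarrow> 'a \<times> nat" where
  "build ch g 0 = (0, 0)"
| "build ch g (Suc J) = (fst (build ch g J) + g J (snd (ch J (fst (build ch g J)) (snd (build ch g J)))),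
      fst (ch J (fst (build ch g J)) (snd (build ch g J))))"

lemma rec_choice:
  fixes g :: "nat \<Rightarrow> nat \<Rightarrow> 'a::real_vector" and Q :: "nat \<Rightarrow> 'a \<Rightarrow> nat \<Rightarrow> nat \<Rightarrow> nat \<Rightarrow> bool"
  assumes "\<And>J S np. \<exists>n m. Q J S np n m"
  shows "\<exists>nn mm. \<forall>J. Q J (\<Sum>j<J. g j (mm j)) (case J of 0 \<Rightarrow> 0 | Suc i \<Rightarrow> nn i) (nn J) (mm J)"
proof -
  define ch where "ch = (\<lambda>J S np. SOME z. Q J S np (fst z) (snd z))"
  have chQ: "Q J S np (fst (ch J S np)) (snd (ch J S np))" for J S np
  proof -
    obtain n m where "Q J S np n m" using assms by blast
    then have "\<exists>z. Q J S np (fst z) (snd z)" by (intro exI[of _ "(n,m)"]) auto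
    then show ?thesis unfolding ch_def by (rule someI_ex)
  qed
  define S where "S J = fst (build ch g J)" for J
  define P where "P J = snd (build ch g J)" for J
  define nn where "nn J = fst (ch J (S J) (P J))" for J
  define mm where "mm J = snd (ch J (S J) (P J))" for J
  have S_eq: "S J = (\<Sum>j<J. g j (mm j))" for J
    by (induction J) (simp_all add: S_def mm_def P_def)
  have P_eq: "P J = (case J of 0 \<Rightarrow> 0 | Suc i \<Rightarrow> nn i)" for J
    by (cases J) (simp_all add: P_def nn_def S_def)
  show ?thesis
    apply (rule exI[of _ nn], rule exI[of _ mm])
    using chQ by (metis S_eq P_eq nn_def mm_def)
qed



theorem mainTheorem5:
  fixes p :: "nat \<Rightarrow> 'a::real_vector \<Rightarrow> real"
    and A :: "nat \<Rightarrow> 'a set"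
    and M :: "nat \<Rightarrow> real"
    and N0 :: "nat set"
    and x :: "nat \<Rightarrow> 'a"
    and m0 :: nat
    and \<delta> :: real
  assumes "separating_seminorms p"
    and "sn_complete p"
    and "approx_scheme p A"
    and "\<forall>k. 0 \<le> M k"
    and "infinite N0"
    and "\<delta> > 0"
    and "\<forall>k. \<forall>n\<in>N0. p k (x n) \<le> M k"
    and "\<forall>n\<in>N0. (INF a\<in>A n. p m0 (x n - a)) > \<delta>"
  shows "shapiro p A"
proof -
  have sem: "\<forall>k. seminorm (p k)" using assms(1) by (simp add: separating_seminorms_def)
  define q where "q = p m0"
  have qs: "seminorm q" using sem q_def by simp
  have AS: "(\<forall>n. A n \<subset> A (Suc n)) \<and>
     (\<exists>K::nat \<Rightarrow> nat. \<forall>n. n \<le> K n \<and> {a + b | a b. a \<in> A n \<and> b \<in> A n} \<subseteq> A (K n)) \<and>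
     (\<forall>n c. (\<lambda>a. c *\<^sub>R a) ` A n \<subseteq> A n) \<and>
     (\<forall>x. \<forall>e>0. \<exists>y\<in>(\<Union>n. A n). sn_dist p x y < e)"
    using assms(3) unfolding approx_scheme_def .
  note AS1 = conjunct1[OF AS] and AS2 = conjunct1[OF conjunct2[OF AS]]
    and AS3 = conjunct1[OF conjunct2[OF conjunct2[OF AS]]] and AS4 = conjunct2[OF conjunct2[OF conjunct2[OF AS]]]
  obtain K where K: "\<forall>n. n \<le> K n \<and> {a + b | a b. a \<in> A n \<and> b \<in> A n} \<subseteq> A (K n)"
    using AS2 by (elim exE)
  have Asuc: "\<And>n. A n \<subseteq> A (Suc n)" using AS1 by (simp add: less_imp_le)
  have Amono: "\<And>n n'. n \<le> n' \<Longrightarrow> A n \<subseteq> A n'" using lift_Suc_mono_le[of A, OF Asuc] by blast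
  have Ascale: "\<And>n c a. a \<in> A n \<Longrightarrow> c *\<^sub>R a \<in> A n" using AS3 by blast
  have Adense: "\<And>z e. e > 0 \<Longrightarrow> \<exists>y\<in>(\<Union>n. A n). sn_dist p z y < e"
    using AS4 by blast
  have qsmall: "q (u - v) < g" if "g > 0" "sn_dist p u v < (1/2)^m0 * (g / (1 + g))" for u v g
  proof -
    have "(1/2::real)^m0 * (q (u - v) / (1 + q (u - v))) < (1/2)^m0 * (g / (1 + g))"
      using sn_lower[OF sem, of m0 u v] that(2) q_def by simp
    moreover have c0: "0 < (1/2::real)^m0" by simp
    ultimately have "q (u - v) / (1 + q (u - v)) < g / (1 + g)"
      by (simp only: mult_less_cancel_left_pos)
    then show ?thesis by (rule phi_mono_less[OF sem_nonneg[OF qs] less_imp_le[OF that(1)]])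
  qed
  define MM where "MM = M m0"
  have MM0: "0 \<le> MM" using assms(4) MM_def by simp
  define th where "th = min (1/2) (\<delta> / (8 * (MM + 1)))"
  have "0 < \<delta> / (8 * (MM + 1))" using assms(6) MM0 by (intro divide_pos_pos) auto
  then have th0: "0 < th" unfolding th_def by simp
  have th1: "th \<le> 1/2" unfolding th_def by (rule min.cobounded1)
  have thM: "th * MM \<le> \<delta> / 8"
  proof -
    have "th * MM \<le> (\<delta> / (8 * (MM + 1))) * MM" using MM0 by (intro mult_right_mono) (auto simp: th_def)
    also have "\<dots> = \<delta> / 8 * (MM / (MM + 1))" by simp
    also have "\<dots> \<le> \<delta> / 8 * 1" using MM0 assms(6) by (intro mult_left_mono) auto
    finally show ?thesis by simp
  qed
  define \<beta> where "\<beta> J = (1/2::real)^m0 * ((th^J * \<delta> / 2) / (1 + th^J * \<delta> / 2))" for J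
  have \<beta>0: "\<beta> J > 0" for J
  proof -
    have "0 < th^J * \<delta> / 2" using th0 assms(6) by simp
    then have "0 < (th^J * \<delta> / 2) / (1 + th^J * \<delta> / 2)" by (intro divide_pos_pos) auto
    then show ?thesis unfolding \<beta>_def by (intro mult_pos_pos) simp_all
  qed
  show ?thesis unfolding shapiro_def
  proof (intro allI impI)
    fix eps :: "nat \<Rightarrow> real"
    assume eps: "decseq eps \<and> (\<forall>n. 0 \<le> eps n) \<and> eps \<longlonglongrightarrow> 0"
    define Q where "Q J S np n m \<longleftrightarrow> np < n \<and> m \<in> N0 \<and> K n \<le> m \<and>
        (\<exists>b\<in>A n. q (S - b) < th^J * \<delta> / 4) \<and> eps n * (real J + 1) < \<beta> J"
      for J S np n m
    have Qex: "\<exists>n m. Q J S np n m" for J S np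
    proof -
      define \<eta> where "\<eta> = th^J * \<delta> / 4"
      have \<eta>0: "\<eta> > 0" using th0 assms(6) by (simp add: \<eta>_def)
      have "(1/2::real)^m0 * (\<eta> / (1 + \<eta>)) > 0" using \<eta>0 by simp
      then obtain y where y: "y \<in> (\<Union>n. A n)" "sn_dist p S y < (1/2)^m0 * (\<eta> / (1 + \<eta>))"
        using Adense by blast
      then obtain r where r: "y \<in> A r" by auto
      have qy: "q (S - y) < \<eta>" using qsmall[OF \<eta>0 y(2)] .
      have "\<forall>\<^sub>F n in sequentially. eps n < \<beta> J / (real J + 1)"
        using eps \<beta>0[of J] by (intro order_tendstoD(2)) auto
      then obtain N where N: "\<And>n. n \<ge> N \<Longrightarrow> eps n < \<beta> J / (real J + 1)"
        by (auto simp: eventually_sequentially)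
      define n where "n = max (max (Suc np) r) N"
      obtain m where m: "m \<in> N0" "K n \<le> m"
        using assms(5) unfolding infinite_nat_iff_unbounded_le by blast
      have "r \<le> n" by (simp add: n_def)
      then have yn: "y \<in> A n" using Amono r by blast
      have "eps n < \<beta> J / (real J + 1)" using N[of n] n_def by simp
      then have "eps n * (real J + 1) < \<beta> J" by (simp add: field_simps)
      then have "Q J S np n m" unfolding Q_def using m yn qy n_def \<eta>_def by auto
      then show ?thesis by blast
    qed
    obtain nn mm where nm: "\<And>J. Q J (\<Sum>j<J. th^j *\<^sub>R x (mm j)) (case J of 0 \<Rightarrow> 0 | Suc i \<Rightarrow> nn i) (nn J) (mm J)"
      using rec_choice[of Q "\<lambda>j m. th^j *\<^sub>R x m", OF Qex] by blast
    define S where "S J = (\<Sum>j<J. th^j *\<^sub>R x (mm j))" for J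
    have nn_inc: "nn J < nn (Suc J)" for J using nm[of "Suc J"] unfolding Q_def by simp
    have nn_ge: "J \<le> nn J" for J
    proof (induction J)
      case (Suc J) then show ?case using nn_inc[of J] by simp
    qed simp
    have mmN0: "mm J \<in> N0" for J using nm[of J] unfolding Q_def by simp
    have xb: "p k (x (mm j)) \<le> M k" for k j using assms(7) mmN0 by auto
    have Ssplit: "S m = S n + (\<Sum>j\<in>{n..<m}. th^j *\<^sub>R x (mm j))" if "n \<le> m" for m n
      using that
    proof (induction m rule: dec_induct)
      case base then show ?case by simp
    next
      case (step m) then show ?case by (simp add: S_def sum.atLeastLessThan_Suc algebra_simps)
    qed
    have Sdiff0: "p k (S m - S n) \<le> 2 * th^n * M k" if "n \<le> m" for k m n
    proof -
      have sk: "seminorm (p k)" using sem by simp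
      have "p k (S m - S n) = p k (\<Sum>j\<in>{n..<m}. th^j *\<^sub>R x (mm j))" using Ssplit[OF that] by simp
      also have "\<dots> \<le> (\<Sum>j\<in>{n..<m}. p k (th^j *\<^sub>R x (mm j)))" by (rule sem_sum[OF sk])
      also have "\<dots> = (\<Sum>j\<in>{n..<m}. th^j * p k (x (mm j)))" using sem_scale[OF sk] th0 by simp
      also have "\<dots> \<le> (\<Sum>j\<in>{n..<m}. th^j * M k)" using xb th0 by (intro sum_mono mult_left_mono) auto
      also have "\<dots> = M k * (\<Sum>j\<in>{n..<m}. th^j)" by (simp add: sum_distrib_left mult.commute)
      also have "\<dots> \<le> M k * (2 * th^n - 2 * th^m)"
        using geo_bound[of th n m] th0 th1 that assms(4) by (intro mult_left_mono) auto
      also have "\<dots> \<le> 2 * th^n * M k" using assms(4) th0 by (simp add: algebra_simps)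
      finally show ?thesis .
    qed
    have Sdiff: "p k (S m - S n) \<le> 2 * th^(min m n) * M k" for k m n
    proof (cases "n \<le> m")
      case True
      then have "min m n = n" by simp
      then show ?thesis using Sdiff0[OF True, of k] by simp
    next
      case False
      then have "p k (S m - S n) = p k (S n - S m)" using sem sem_minus_sym by blast
      moreover have "min m n = m" using False by simp
      moreover have "p k (S n - S m) \<le> 2 * th^m * M k" using Sdiff0[of m n k] False by simp
      ultimately show ?thesis by simp
    qed
    have cauchy: "\<forall>e>0. \<exists>N. \<forall>m\<ge>N. \<forall>n\<ge>N. sn_dist p (S m) (S n) < e"
    proof (intro allI impI)
      fix e :: real assume e: "e > 0"
      obtain K0 where K0: "(1/2::real)^K0 < e/2" using real_arch_pow_inv[of "e/2" "1/2::real"] e by auto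
      define Mx where "Mx = (\<Sum>k\<le>K0. M k)"
      have Mxk: "M k \<le> Mx" if "k \<le> K0" for k
        unfolding Mx_def using assms(4) that by (intro member_le_sum) auto
      have Mx0: "0 \<le> Mx" using Mxk[of 0] assms(4)[rule_format, of 0] by linarith
      have "e / (4 * (Mx + 1)) > 0" using e Mx0 by simp
      then obtain N where N: "th^N < e / (4 * (Mx + 1))"
        using real_arch_pow_inv[of "e / (4*(Mx+1))" th] th1 by auto
      have N': "2 * th^N * Mx \<le> e / 2"
      proof -
        have "th^N * (4 * (Mx + 1)) < e" using N Mx0 by (simp add: field_simps)
        moreover have "2 * th^N * Mx \<le> th^N * (4 * (Mx + 1)) / 2" using th0 Mx0 by (simp add: algebra_simps)
        ultimately show ?thesis by simp
      qed
      show "\<exists>N. \<forall>m\<ge>N. \<forall>n\<ge>N. sn_dist p (S m) (S n) < e"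
      proof (intro exI allI impI)
        fix m n assume mn: "N \<le> m" "N \<le> n"
        have "sn_dist p (S m) (S n) \<le> e/2"
        proof (rule sn_upper)
          fix k
          define t where "t = p k (S m - S n)"
          have t0: "0 \<le> t" using sem sem_nonneg t_def by blast
          have phi1: "t / (1 + t) \<le> 1" using t0 by simp
          have phile: "t / (1 + t) \<le> t" using t0 by (simp add: divide_simps algebra_simps)
          have phi0: "0 \<le> t / (1 + t)" using t0 by simp
          have "(1/2::real) ^ k * (t / (1 + t)) \<le> e/2"
          proof (cases "k \<le> K0")
            case True
            have "t \<le> 2 * th^(min m n) * M k" using Sdiff t_def by simp
            also have "\<dots> \<le> 2 * th^N * Mx"
            proof -
              have "th^(min m n) \<le> th^N" using th0 th1 mn by (intro power_decreasing) auto
              then show ?thesis using Mxk[OF True] assms(4) th0 by (intro mult_mono) auto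
            qed
            also have "\<dots> \<le> e/2" by (rule N')
            finally have "t \<le> e/2" .
            moreover have "(1/2::real)^k * (t / (1 + t)) \<le> 1 * (t / (1 + t))"
              using phi0 by (intro mult_right_mono) (auto simp: power_le_one)
            ultimately show ?thesis using phile by linarith
          next
            case False
            have "(1/2::real)^k \<le> (1/2)^K0" using False by (intro power_decreasing) auto
            moreover have "(1/2::real)^k * (t / (1 + t)) \<le> (1/2)^k * 1"
              using phi1 by (intro mult_left_mono) auto
            ultimately show ?thesis using K0 by linarith
          qed
          then show "(1/2::real) ^ k * (p k (S m - S n) / (1 + p k (S m - S n))) \<le> e/2"
            by (simp add: t_def)
        qed
        then show "sn_dist p (S m) (S n) < e" using e by simp
      qed
    qed
    obtain l where l: "(\<lambda>n. sn_dist p (S n) l) \<longlonglongrightarrow> 0"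
      using assms(2) cauchy unfolding sn_complete_def by blast
    have tail: "q (l - S J) \<le> 2 * th^J * MM" for J
    proof (rule field_le_epsilon)
      fix g :: real assume g: "g > 0"
      have "(1/2::real)^m0 * (g / (1 + g)) > 0" using g by simp
      then have "\<forall>\<^sub>F n in sequentially. sn_dist p (S n) l < (1/2)^m0 * (g / (1 + g))"
        using l by (intro order_tendstoD(2)) auto
      then obtain N where N: "\<And>n. n \<ge> N \<Longrightarrow> sn_dist p (S n) l < (1/2)^m0 * (g / (1 + g))"
        by (auto simp: eventually_sequentially)
      define n where "n = max N J"
      have qn: "q (S n - l) < g" using qsmall[OF g N[of n]] n_def by simp
      have "q (l - S J) = q ((l - S n) + (S n - S J))" by simp
      also have "\<dots> \<le> q (l - S n) + q (S n - S J)" by (rule sem_tri[OF qs])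
      also have "q (l - S n) = q (S n - l)" using sem_minus_sym[OF qs] by blast
      also have "q (S n - S J) \<le> 2 * th^J * MM"
        using Sdiff0[of J n m0] n_def q_def MM_def by simp
      finally show "q (l - S J) \<le> 2 * th^J * MM + g" using qn by linarith
    qed
    have lower: "best_err p l (A (nn J)) \<ge> \<beta> J" for J
    proof -
      from nm[of J] obtain b where b: "b \<in> A (nn J)" "q (S J - b) < th^J * \<delta> / 4"
        and Kle: "K (nn J) \<le> mm J" and mmN: "mm J \<in> N0"
        unfolding Q_def S_def by blast
      have pa: "q (l - a) \<ge> th^J * \<delta> / 2" if a: "a \<in> A (nn J)" for a
      proof -
        define z where "z = (1 / th^J) *\<^sub>R (a - b)"
        have "(-1) *\<^sub>R b \<in> A (nn J)" using Ascale[OF b(1)] by blast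
        then have "a + (-b) \<in> {u + v | u v. u \<in> A (nn J) \<and> v \<in> A (nn J)}" using a by (intro CollectI exI[of _ a] exI[of _ "-b"]) simp
        then have "a + (-b) \<in> A (K (nn J))" using K by blast
        then have "z \<in> A (K (nn J))" using Ascale z_def by simp
        then have zA: "z \<in> A (mm J)" using Amono[OF Kle] by blast
        have "(INF a\<in>A (mm J). q (x (mm J) - a)) > \<delta>" using assms(8) mmN q_def by auto
        moreover have "(INF a\<in>A (mm J). q (x (mm J) - a)) \<le> q (x (mm J) - z)"
          by (rule cINF_lower[OF _ zA]) (auto intro: bdd_belowI2 sem_nonneg[OF qs])
        ultimately have zq: "q (x (mm J) - z) > \<delta>" by simp
        have eq1: "th^J *\<^sub>R x (mm J) - (a - b) = th^J *\<^sub>R (x (mm J) - z)"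
          using th0 by (simp add: z_def algebra_simps)
        have mid: "q (th^J *\<^sub>R x (mm J) - (a - b)) \<ge> th^J * \<delta>"
          unfolding eq1 sem_scale[OF qs] using zq th0 by (simp add: mult_left_mono)
        have SJ: "S (Suc J) = S J + th^J *\<^sub>R x (mm J)" by (simp add: S_def)
        have deco: "th^J *\<^sub>R x (mm J) - (a - b) = (l - a) + (- ((S J - b) + (l - S (Suc J))))"
          using SJ by (simp add: algebra_simps)
        have "q (th^J *\<^sub>R x (mm J) - (a - b)) \<le> q (l - a) + q (- ((S J - b) + (l - S (Suc J))))"
          unfolding deco by (rule sem_tri[OF qs])
        also have "q (- ((S J - b) + (l - S (Suc J)))) = q ((S J - b) + (l - S (Suc J)))"
          by (rule sem_neg[OF qs])
        also have "q ((S J - b) + (l - S (Suc J))) \<le> q (S J - b) + q (l - S (Suc J))"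
          by (rule sem_tri[OF qs])
        finally have "th^J * \<delta> \<le> q (l - a) + (q (S J - b) + q (l - S (Suc J)))" using mid by linarith
        moreover have "q (l - S (Suc J)) \<le> th^J * \<delta> / 4"
        proof -
          have "q (l - S (Suc J)) \<le> 2 * th^(Suc J) * MM" by (rule tail)
          also have "\<dots> = 2 * th^J * (th * MM)" by simp
          also have "\<dots> \<le> 2 * th^J * (\<delta> / 8)" using thM th0 by (intro mult_left_mono) auto
          finally show ?thesis by (simp add: mult.commute)
        qed
        ultimately show ?thesis using b(2) by linarith
      qed
      have ne: "A (nn J) \<noteq> {}" using b by auto
      show ?thesis unfolding best_err_def \<beta>_def
      proof (rule cINF_greatest[OF ne])
        fix a assume a: "a \<in> A (nn J)"
        have "0 \<le> th^J * \<delta> / 2" using th0 assms(6) by simp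
        then have "(th^J * \<delta> / 2) / (1 + th^J * \<delta> / 2) \<le> q (l - a) / (1 + q (l - a))"
          using phi_mono_le pa[OF a] by blast
        then have "(1/2::real)^m0 * ((th^J * \<delta> / 2) / (1 + th^J * \<delta> / 2))
            \<le> (1/2)^m0 * (q (l - a) / (1 + q (l - a)))" by (intro mult_left_mono) auto
        also have "\<dots> \<le> sn_dist p l a" using sn_lower[OF sem, of m0 l a] q_def by simp
        finally show "(1/2::real)^m0 * ((th^J * \<delta> / 2) / (1 + th^J * \<delta> / 2)) \<le> sn_dist p l a" .
      qed
    qed
    show "\<exists>x. (\<lambda>n. best_err p x (A n)) \<notin> O(eps)"
    proof (intro exI[of _ l] notI)
      assume "(\<lambda>n. best_err p l (A n)) \<in> O(eps)"
      then obtain c where c: "c > 0" "\<forall>\<^sub>F n in at_top. norm (best_err p l (A n)) \<le> c * norm (eps n)"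
        unfolding bigo_def by blast
      then obtain N where N: "\<And>n. n \<ge> N \<Longrightarrow> norm (best_err p l (A n)) \<le> c * norm (eps n)"
        by (auto simp: eventually_at_top_linorder)
      define J where "J = max N (nat \<lceil>c\<rceil>)"
      have "nn J \<ge> N" using nn_ge[of J] J_def by simp
      moreover have bpos: "best_err p l (A (nn J)) > 0" using lower[of J] \<beta>0[of J] by simp
      ultimately have h1: "best_err p l (A (nn J)) \<le> c * eps (nn J)"
        using N[of "nn J"] eps by simp
      have e0: "eps (nn J) \<ge> 0" using eps by simp
      have "c \<le> real (nat \<lceil>c\<rceil>)" by (rule real_nat_ceiling_ge)
      moreover have "real (nat \<lceil>c\<rceil>) \<le> real J" by (simp add: J_def)
      ultimately have "c \<le> real J" by linarith
      then have "c * eps (nn J) \<le> real J * eps (nn J)" using e0 by (intro mult_right_mono)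
      moreover have "eps (nn J) * (real J + 1) < \<beta> J" using nm[of J] unfolding Q_def by simp
      ultimately show False using h1 lower[of J] e0 by (simp add: algebra_simps)
    qed
  qed
qed


end
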